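(* Let $f,q\in\mathbb{R}[x_1,\dots,x_n]$ with $q\in\mathcal Q(1-x_1^2,\dots,1-x_n^2)_r$ and $r\ge\deg(f)$. Then \[ f+\|f-q\|_{1,\mathrm{cheb}}\in\mathcal Q(1-x_1^2,\dots,1-x_n^2)_{2r}. \]
   Context: $\Sigma[x]_r$ is the cone of sums of squares of polynomials in $x=(x_1,\dots,x_n)$ of total degree at most $r$; $\mathcal Q(1-x_1^2,\dots,1-x_n^2)_r=\Sigma[x]_r+\sum_{i=1}^n(1-x_i^2)\Sigma[x]_{r-2}$. $T_k(x)=\cos(k\arccos x)$ is the Chebyshev polynomial of the first kind; for $\alpha\in\mathbb{N}_0^n$, $T_\alpha(x)=\prod_iT_{\alpha_i}(x_i)$; for $p=\sum_\alpha p_\alpha T_\alpha$, $\|p\|_{1,\mathrm{cheb}}=\sum_\alpha|p_\alpha|$. *)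

theory Defs
  imports Complex_Main "HOL-Library.Poly_Mapping"
begin

text \<open>Multivariate real polynomials: finitely supported maps from monomials
(exponent vectors nat =>0 nat, variable i has index i) to real coefficients.\<close>

type_synonym mpoly = "(nat \<Rightarrow>\<^sub>0 nat) \<Rightarrow>\<^sub>0 real"

definition mconst :: "real \<Rightarrow> mpoly" where
  "mconst c = Poly_Mapping.single 0 c"

definition mvar :: "nat \<Rightarrow> mpoly" where
  "mvar i = Poly_Mapping.single (Poly_Mapping.single i 1) 1"

definition vars_in :: "nat \<Rightarrow> mpoly \<Rightarrow> bool" where
  "vars_in n p \<longleftrightarrow> (\<forall>m\<in>Poly_Mapping.keys (p::mpoly). Poly_Mapping.keys m \<subseteq> {..<n})"

definition total_deg :: "mpoly \<Rightarrow> nat" where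
  "total_deg (p::mpoly) = Max (insert 0 ((\<lambda>m. sum (Poly_Mapping.lookup m) (Poly_Mapping.keys m)) ` Poly_Mapping.keys p))"

text \<open>Sigma[x]_d: sums of squares of polynomials in n variables of degree at most d
(squares of polynomials g with 2 deg g <= d). d is an integer so that negative
degree bounds give the cone {0}.\<close>
definition sos_cone :: "nat \<Rightarrow> int \<Rightarrow> mpoly set" where
  "sos_cone n d = {sum_list (map (\<lambda>g. g * g) gs) | gs.
      \<forall>g\<in>set gs. vars_in n g \<and> 2 * int (total_deg g) \<le> d}"

definition quad_module :: "nat \<Rightarrow> nat \<Rightarrow> mpoly set" where
  "quad_module n r = {s0 + (\<Sum>i<n. (1 - mvar i * mvar i) * s i) | s0 s.
      s0 \<in> sos_cone n (int r) \<and> (\<forall>i<n. s i \<in> sos_cone n (int r - 2))}"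

fun chebT :: "nat \<Rightarrow> nat \<Rightarrow> mpoly" where
  "chebT i 0 = 1"
| "chebT i (Suc 0) = mvar i"
| "chebT i (Suc (Suc k)) = 2 * mvar i * chebT i (Suc k) - chebT i k"

definition chebT_multi :: "(nat \<Rightarrow>\<^sub>0 nat) \<Rightarrow> mpoly" where
  "chebT_multi \<alpha> = (\<Prod>i\<in>Poly_Mapping.keys \<alpha>. chebT i (Poly_Mapping.lookup \<alpha> i))"

text \<open>Chebyshev coefficients: the unique finitely supported family c with
p = sum_alpha c_alpha T_alpha (the T_alpha form a basis).\<close>
definition cheb_coeffs :: "mpoly \<Rightarrow> (nat \<Rightarrow>\<^sub>0 nat) \<Rightarrow>\<^sub>0 real" where
  "cheb_coeffs p = (THE c. p = (\<Sum>\<alpha>\<in>Poly_Mapping.keys c. mconst (Poly_Mapping.lookup c \<alpha>) * chebT_multi \<alpha>))"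

definition cheb_norm1 :: "mpoly \<Rightarrow> real" where
  "cheb_norm1 p = (\<Sum>\<alpha>\<in>Poly_Mapping.keys (cheb_coeffs p). \<bar>Poly_Mapping.lookup (cheb_coeffs p) \<alpha>\<bar>)"

end

theory Submission imports Defs begin

abbreviation lk :: "('a \<Rightarrow>\<^sub>0 'b::zero) \<Rightarrow> 'a \<Rightarrow> 'b" where "lk \<equiv> Poly_Mapping.lookup"
abbreviation ks :: "('a \<Rightarrow>\<^sub>0 'b::zero) \<Rightarrow> 'a set" where "ks \<equiv> Poly_Mapping.keys"

definition mdeg :: "(nat \<Rightarrow>\<^sub>0 nat) \<Rightarrow> nat" where
  "mdeg m = sum (lk m) (ks m)"

definition le' :: "(nat \<Rightarrow>\<^sub>0 nat) \<Rightarrow> (nat \<Rightarrow>\<^sub>0 nat) \<Rightarrow> bool" where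
  "le' x a \<longleftrightarrow> (\<forall>i. lk x i \<le> lk a i)"

lemma mdeg_sum: "finite S \<Longrightarrow> ks m \<subseteq> S \<Longrightarrow> mdeg m = sum (lk m) S"
  unfolding mdeg_def by (rule sum.mono_neutral_left) (auto simp: in_keys_iff)

lemma mdeg_add: "mdeg (a + b) = mdeg a + mdeg b"
proof -
  have f: "finite (ks a \<union> ks b)" by simp
  have "mdeg (a+b) = sum (lk (a+b)) (ks a \<union> ks b)"
    by (rule mdeg_sum[OF f keys_add])
  also have "\<dots> = sum (lk a) (ks a \<union> ks b) + sum (lk b) (ks a \<union> ks b)"
    by (simp add: lookup_add sum.distrib)
  also have "\<dots> = mdeg a + mdeg b"
    using mdeg_sum[OF f, of a] mdeg_sum[OF f, of b] by simp
  finally show ?thesis .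
qed

lemma mdeg_zero[simp]: "mdeg 0 = 0" by (simp add: mdeg_def)

lemma le'_keys: "le' x a \<Longrightarrow> ks x \<subseteq> ks a"
  unfolding le'_def by (auto simp: in_keys_iff) (meson less_le_trans)

lemma le'_mdeg: "le' x a \<Longrightarrow> mdeg x \<le> mdeg a"
proof -
  assume h: "le' x a"
  have "mdeg x = sum (lk x) (ks a)" using le'_keys[OF h] by (intro mdeg_sum) auto
  also have "\<dots> \<le> sum (lk a) (ks a)" using h unfolding le'_def by (intro sum_mono) auto
  finally show ?thesis by (simp add: mdeg_def)
qed

lemma le'_mdeg_strict: "le' x a \<Longrightarrow> x \<noteq> a \<Longrightarrow> mdeg x < mdeg a"
proof -
  assume h: "le' x a" and ne: "x \<noteq> a"
  then obtain i where i: "lk x i \<noteq> lk a i" by (meson poly_mapping_eqI)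
  then have ia: "i \<in> ks a" using h unfolding le'_def in_keys_iff by (metis le_zero_eq)
  have "mdeg x = sum (lk x) (ks a)" using le'_keys[OF h] by (intro mdeg_sum) auto
  also have "\<dots> < sum (lk a) (ks a)" using h i ia unfolding le'_def
    by (intro sum_strict_mono_ex1) (auto intro: le_neq_implies_less)
  finally show ?thesis by (simp add: mdeg_def)
qed

lemma le'_refl[simp]: "le' a a" by (simp add: le'_def)
lemma le'_zero[simp]: "le' 0 a" by (simp add: le'_def)
lemma le'_trans: "le' x y \<Longrightarrow> le' y z \<Longrightarrow> le' x z" unfolding le'_def by (meson order_trans)
lemma le'_add: "le' x a \<Longrightarrow> le' y b \<Longrightarrow> le' (x + y) (a + b)"
  unfolding le'_def by (simp add: lookup_add add_mono)
lemma le'_add_right: "le' x a \<Longrightarrow> le' x (a + b)"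
  unfolding le'_def by (simp add: lookup_add add_increasing2)
lemma le'_add_left: "le' x b \<Longrightarrow> le' x (a + b)"
  unfolding le'_def by (simp add: lookup_add add_increasing)
lemma le'_add_eq: "le' x a \<Longrightarrow> le' y b \<Longrightarrow> x + y = a + b \<Longrightarrow> x = a \<and> y = b"
proof -
  assume h: "le' x a" "le' y b" "x + y = a + b"
  have "\<forall>i. lk x i + lk y i = lk a i + lk b i" using h(3) by (metis lookup_add)
  then have "\<forall>i. lk x i = lk a i \<and> lk y i = lk b i" using h(1,2) unfolding le'_def
    by (metis add_le_cancel_left add_le_cancel_right le_antisym)
  then show ?thesis by (auto intro: poly_mapping_eqI)
qed
lemma le'_single: "j \<le> k \<Longrightarrow> le' (Poly_Mapping.single i j) (Poly_Mapping.single i k)"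
  unfolding le'_def by (simp add: lookup_single when_def)

lemma mconst_add: "mconst (a + b) = mconst a + mconst b" by (simp add: mconst_def single_add)
lemma mconst_mult: "mconst (a * b) = mconst a * mconst b" by (simp add: mconst_def mult_single)
lemma mconst_one[simp]: "mconst 1 = 1" by (simp add: mconst_def)
lemma mconst_zero[simp]: "mconst 0 = 0" by (simp add: mconst_def)
lemma mconst_uminus: "mconst (- a) = - mconst a" by (simp add: mconst_def single_uminus)
lemma mconst_diff: "mconst (a - b) = mconst a - mconst b" by (simp add: mconst_def single_diff)
lemma mconst_sum: "mconst (sum f S) = sum (\<lambda>x. mconst (f x)) S"
  by (induction S rule: infinite_finite_induct) (auto simp: mconst_add)
lemma mconst_numeral: "mconst (numeral k) = numeral k" by (simp add: mconst_def)
lemma lookup_mconst_mult: "lk (mconst c * p) m = c * lk p m"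
  unfolding mconst_def mult_map_scale_conv_mult[symmetric] by (simp add: map.rep_eq when_def)
lemma keys_mconst_mult: "ks (mconst c * p) \<subseteq> ks p"
  by (auto simp: in_keys_iff lookup_mconst_mult)
lemma keys_mconst: "ks (mconst c) \<subseteq> {0}" by (simp add: mconst_def)
lemma mconst_single: "mconst c * Poly_Mapping.single m 1 = Poly_Mapping.single m c"
  by (simp add: mconst_def mult_single)

lemma poly_expand: "(p::mpoly) = (\<Sum>x\<in>ks p. mconst (lk p x) * Poly_Mapping.single x 1)"
proof (rule poly_mapping_eqI)
  fix m
  show "lk p m = lk (\<Sum>x\<in>ks p. mconst (lk p x) * Poly_Mapping.single x 1) m"
    by (simp add: mconst_single lookup_sum lookup_single when_def in_keys_iff)
qed

lemma keys_mult_le':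
  assumes "\<forall>x\<in>ks (p::mpoly). le' x a" "\<forall>y\<in>ks q. le' y b"
  shows "\<forall>z\<in>ks (p*q). le' z (a + b)"
  using keys_mult[of p q] assms le'_add by blast

lemma top_mult:
  assumes hp: "\<forall>x\<in>ks (p::mpoly). le' x a" and hq: "\<forall>y\<in>ks q. le' y b"
  shows "lk (p*q) (a + b) = lk p a * lk q b"
proof -
  define p' where "p' = p - Poly_Mapping.single a (lk p a)"
  define q' where "q' = q - Poly_Mapping.single b (lk q b)"
  have kp': "ks p' \<subseteq> ks p - {a}" unfolding p'_def
    by (auto simp: in_keys_iff lookup_minus lookup_single when_def split: if_splits)
  have kq': "ks q' \<subseteq> ks q - {b}" unfolding q'_def
    by (auto simp: in_keys_iff lookup_minus lookup_single when_def split: if_splits)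
  have "p * q = Poly_Mapping.single a (lk p a) * Poly_Mapping.single b (lk q b)
      + Poly_Mapping.single a (lk p a) * q' + p' * q"
    unfolding p'_def q'_def by (simp add: algebra_simps)
  moreover have "lk (Poly_Mapping.single a (lk p a) * q') (a + b) = 0"
  proof -
    have "a + b \<notin> ks (Poly_Mapping.single a (lk p a) * q')"
    proof
      assume "a + b \<in> ks (Poly_Mapping.single a (lk p a) * q')"
      then obtain u v where "u \<in> ks (Poly_Mapping.single a (lk p a))" "v \<in> ks q'" "a + b = u + v"
        using keys_mult by blast
      then show False using kq' by (auto split: if_splits)
    qed
    then show ?thesis by (simp add: in_keys_iff)
  qed
  moreover have "lk (p' * q) (a + b) = 0"
  proof -
    have "a + b \<notin> ks (p' * q)"
    proof
      assume "a + b \<in> ks (p' * q)"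
      then obtain u v where uv: "u \<in> ks p'" "v \<in> ks q" "a + b = u + v"
        using keys_mult by blast
      then have "u = a" using le'_add_eq[of u a v b] hp hq kp' by auto
      then show False using uv kp' by auto
    qed
    then show ?thesis by (simp add: in_keys_iff)
  qed
  ultimately show ?thesis by (simp add: lookup_add mult_single)
qed


lemma two_mvar: "2 * mvar i = Poly_Mapping.single (Poly_Mapping.single i 1) (2::real)"
  unfolding mvar_def by (metis add_0 mult_1_right mult_single single_numeral)

lemma keys_mvar: "ks (mvar i) = {Poly_Mapping.single i 1}" by (simp add: mvar_def)

lemma chebT_keys: "\<forall>x\<in>ks (chebT i k). le' x (Poly_Mapping.single i k)"
proof (induction i k rule: chebT.induct)
  case (1 i) then show ?case by simp
next
  case (2 i) then show ?case by (simp add: keys_mvar)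
next
  case (3 i k)
  have a: "\<forall>z\<in>ks (2 * mvar i * chebT i (Suc k)). le' z (Poly_Mapping.single i 1 + Poly_Mapping.single i (Suc k))"
    by (rule keys_mult_le') (use 3 in \<open>auto simp: two_mvar\<close>)
  have e: "Poly_Mapping.single i 1 + Poly_Mapping.single i (Suc k) = Poly_Mapping.single i (Suc (Suc k))"
    by (simp add: single_add[symmetric])
  have b: "\<forall>z\<in>ks (chebT i k). le' z (Poly_Mapping.single i (Suc (Suc k)))"
  proof
    fix z assume "z \<in> ks (chebT i k)"
    then have "le' z (Poly_Mapping.single i k)" using 3(2) by blast
    moreover have "le' (Poly_Mapping.single i k) (Poly_Mapping.single i (Suc (Suc k)))" by (rule le'_single) simp
    ultimately show "le' z (Poly_Mapping.single i (Suc (Suc k)))" by (rule le'_trans)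
  qed
  have "ks (chebT i (Suc (Suc k))) \<subseteq> ks (2 * mvar i * chebT i (Suc k)) \<union> ks (chebT i k)"
    by (simp only: chebT.simps) (rule keys_diff)
  then show ?case using a b e by auto
qed

lemma chebT_lead: "lk (chebT i k) (Poly_Mapping.single i k) \<ge> 1"
proof (induction i k rule: chebT.induct)
  case (1 i) then show ?case by simp
next
  case (2 i) then show ?case by (simp add: mvar_def)
next
  case (3 i k)
  have e: "Poly_Mapping.single i 1 + Poly_Mapping.single i (Suc k) = Poly_Mapping.single i (Suc (Suc k))"
    by (simp add: single_add[symmetric])
  have "lk (2 * mvar i * chebT i (Suc k)) (Poly_Mapping.single i 1 + Poly_Mapping.single i (Suc k))
     = 2 * lk (chebT i (Suc k)) (Poly_Mapping.single i (Suc k))"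
    by (subst top_mult) (use chebT_keys in \<open>auto simp: two_mvar\<close>)
  moreover have "lk (chebT i k) (Poly_Mapping.single i (Suc (Suc k))) = 0"
  proof -
    have "Poly_Mapping.single i (Suc (Suc k)) \<notin> ks (chebT i k)"
    proof
      assume "Poly_Mapping.single i (Suc (Suc k)) \<in> ks (chebT i k)"
      then have "le' (Poly_Mapping.single i (Suc (Suc k))) (Poly_Mapping.single i k)"
        using chebT_keys by blast
      then show False unfolding le'_def by (metis lookup_single_eq Suc_n_not_le_n le_SucI)
    qed
    then show ?thesis by (simp add: in_keys_iff)
  qed
  ultimately show ?case using 3 e by (simp add: lookup_minus)
qed

fun chebW :: "nat \<Rightarrow> nat \<Rightarrow> mpoly" where
  "chebW i 0 = 0"
| "chebW i (Suc k) = mvar i * chebW i k + chebT i k"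

lemma chebT_W_aux: "chebT i (Suc k) = mvar i * chebT i k - (1 - mvar i * mvar i) * chebW i k
   \<and> chebT i (Suc (Suc k)) = mvar i * chebT i (Suc k) - (1 - mvar i * mvar i) * chebW i (Suc k)"
proof (induction k)
  case 0 then show ?case by (simp add: algebra_simps)
next
  case (Suc k)
  then have E: "chebT i (Suc (Suc k)) = mvar i * chebT i (Suc k) - (1 - mvar i * mvar i) * chebW i (Suc k)" by blast
  have "chebT i (Suc (Suc (Suc k))) = 2 * mvar i * chebT i (Suc (Suc k)) - chebT i (Suc k)" by simp
  also have "\<dots> = mvar i * chebT i (Suc (Suc k)) - (1 - mvar i * mvar i) * chebW i (Suc (Suc k))"
    unfolding chebW.simps by (subst (1 2) E) (simp add: algebra_simps)
  finally show ?case using E by blast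
qed

lemma chebT_W: "chebT i (Suc k) = mvar i * chebT i k - (1 - mvar i * mvar i) * chebW i k"
  using chebT_W_aux by blast

lemma pell: "chebT i k * chebT i k + (1 - mvar i * mvar i) * (chebW i k * chebW i k) = 1"
proof (induction k)
  case 0 then show ?case by simp
next
  case (Suc k)
  show ?case unfolding chebT_W chebW.simps using Suc by (simp add: algebra_simps)
qed

lemma chebW_keys: "\<forall>x\<in>ks (chebW i k). le' x (Poly_Mapping.single i (k - 1))"
proof (induction k)
  case 0 then show ?case by simp
next
  case (Suc k)
  show ?case
  proof (cases k)
    case 0 then show ?thesis by simp
  next
    case (Suc m)
    have a: "\<forall>z\<in>ks (mvar i * chebW i k). le' z (Poly_Mapping.single i 1 + Poly_Mapping.single i (k - 1))"
      by (rule keys_mult_le') (use Suc.IH in \<open>auto simp: keys_mvar\<close>)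
    have e: "Poly_Mapping.single i 1 + Poly_Mapping.single i (k - 1) = Poly_Mapping.single i k"
      using Suc by (simp add: single_add[symmetric])
    have "ks (chebW i (Suc k)) \<subseteq> ks (mvar i * chebW i k) \<union> ks (chebT i k)"
      by (simp only: chebW.simps) (rule keys_add)
    then show ?thesis using a e chebT_keys[of i k] by auto
  qed
qed


definition SOS :: "(nat \<Rightarrow>\<^sub>0 nat) set \<Rightarrow> mpoly \<Rightarrow> bool" where
  "SOS B s \<longleftrightarrow> (\<exists>gs. s = sum_list (map (\<lambda>g. g * g) gs) \<and> (\<forall>g\<in>set gs. ks g \<subseteq> B))"

lemma SOS_zero: "SOS B 0" unfolding SOS_def by (rule exI[of _ "[]"]) simp

lemma SOS_sq: "ks g \<subseteq> B \<Longrightarrow> SOS B (g * g)" unfolding SOS_def by (rule exI[of _ "[g]"]) simp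

lemma sum_list_sq_mult: "sum_list (map (\<lambda>g. g * g) (map ((*) t) gs)) = t * t * sum_list (map (\<lambda>g. g * g) gs)" for t :: mpoly
  by (induction gs) (simp_all add: algebra_simps)

lemma SOS_mult:
  assumes "SOS B s" "\<forall>g. ks g \<subseteq> B \<longrightarrow> ks (t * g) \<subseteq> B'"
  shows "SOS B' (t * t * s)"
proof -
  obtain gs where gs: "s = sum_list (map (\<lambda>g. g * g) gs)" "\<forall>g\<in>set gs. ks g \<subseteq> B"
    using assms(1) unfolding SOS_def by blast
  show ?thesis unfolding SOS_def
    by (rule exI[of _ "map ((*) t) gs"]) (use gs assms(2) sum_list_sq_mult in auto)
qed

definition PK :: "(nat \<Rightarrow>\<^sub>0 nat) \<Rightarrow> nat set \<Rightarrow> mpoly" where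
  "PK \<alpha> K = (\<Prod>i\<in>K. chebT i (lk \<alpha> i))"
definition aK :: "(nat \<Rightarrow>\<^sub>0 nat) \<Rightarrow> nat set \<Rightarrow> (nat \<Rightarrow>\<^sub>0 nat)" where
  "aK \<alpha> K = (\<Sum>i\<in>K. Poly_Mapping.single i (lk \<alpha> i))"

lemma alpha_aK: "aK \<alpha> (ks \<alpha>) = \<alpha>"
  unfolding aK_def by (rule poly_mapping_eqI) (simp add: lookup_sum lookup_single when_def in_keys_iff)

lemma chebT_multi_PK: "chebT_multi \<alpha> = PK \<alpha> (ks \<alpha>)"
  by (simp add: chebT_multi_def PK_def)

lemma PK_keys: "finite K \<Longrightarrow> \<forall>x\<in>ks (PK \<alpha> K). le' x (aK \<alpha> K)"
proof (induction K rule: finite_induct)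
  case empty then show ?case by (simp add: PK_def aK_def)
next
  case (insert j K)
  have "PK \<alpha> (insert j K) = chebT j (lk \<alpha> j) * PK \<alpha> K"
    "aK \<alpha> (insert j K) = Poly_Mapping.single j (lk \<alpha> j) + aK \<alpha> K"
    using insert(1,2) by (simp_all add: PK_def aK_def)
  then show ?case using keys_mult_le'[OF chebT_keys insert(3)] by simp
qed

lemma PK_lead: "finite K \<Longrightarrow> lk (PK \<alpha> K) (aK \<alpha> K) \<ge> 1"
proof (induction K rule: finite_induct)
  case empty then show ?case by (simp add: PK_def aK_def)
next
  case (insert j K)
  have "lk (PK \<alpha> (insert j K)) (aK \<alpha> (insert j K)) =
        lk (chebT j (lk \<alpha> j) * PK \<alpha> K) (Poly_Mapping.single j (lk \<alpha> j) + aK \<alpha> K)"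
    using insert by (simp add: PK_def aK_def)
  also have "\<dots> = lk (chebT j (lk \<alpha> j)) (Poly_Mapping.single j (lk \<alpha> j)) * lk (PK \<alpha> K) (aK \<alpha> K)"
    by (rule top_mult) (use chebT_keys PK_keys insert in auto)
  also have "\<dots> \<ge> 1" using chebT_lead insert.IH
    by (metis mult_mono' mult_1 order_trans zero_le_one)
  finally show ?case .
qed

lemma telescope:
  assumes "finite K" "K \<subseteq> ks \<alpha>"
  shows "\<exists>s. 1 - PK \<alpha> K * PK \<alpha> K = (\<Sum>i\<in>K. (1 - mvar i * mvar i) * s i)
     \<and> (\<forall>i\<in>K. SOS {x. le' x (aK \<alpha> K) \<and> x \<noteq> aK \<alpha> K} (s i))"
  using assms
proof (induction K rule: finite_induct)
  case empty then show ?case by (simp add: PK_def)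
next
  case (insert j K)
  then obtain s where s: "1 - PK \<alpha> K * PK \<alpha> K = (\<Sum>i\<in>K. (1 - mvar i * mvar i) * s i)"
     "\<forall>i\<in>K. SOS {x. le' x (aK \<alpha> K) \<and> x \<noteq> aK \<alpha> K} (s i)" by auto
  define t where "t = chebT j (lk \<alpha> j)"
  define w where "w = chebW j (lk \<alpha> j)"
  define a' where "a' = aK \<alpha> (insert j K)"
  have a'e: "a' = Poly_Mapping.single j (lk \<alpha> j) + aK \<alpha> K" using insert by (simp add: a'_def aK_def)
  have P'e: "PK \<alpha> (insert j K) = t * PK \<alpha> K" using insert by (simp add: PK_def t_def)
  define s' where "s' i = (if i = j then w * w else t * t * s i)" for i
  have id: "1 - PK \<alpha> (insert j K) * PK \<alpha> (insert j K) = (\<Sum>i\<in>insert j K. (1 - mvar i * mvar i) * s' i)"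
  proof -
    have "(\<Sum>i\<in>insert j K. (1 - mvar i * mvar i) * s' i) = (1 - mvar j * mvar j) * (w * w) + (\<Sum>i\<in>K. (1 - mvar i * mvar i) * (t * t * s i))"
      using insert by (simp add: s'_def) (rule sum.cong, auto)
    also have "\<dots> = (1 - mvar j * mvar j) * (w * w) + t * t * (1 - PK \<alpha> K * PK \<alpha> K)"
      by (simp add: s sum_distrib_left algebra_simps)
    also have "\<dots> = 1 - PK \<alpha> (insert j K) * PK \<alpha> (insert j K)"
      using pell[of j "lk \<alpha> j"] unfolding P'e t_def[symmetric] w_def[symmetric]
      by (simp add: algebra_simps)
    finally show ?thesis by simp
  qed
  have jpos: "lk \<alpha> j \<ge> 1" using insert(4) by (auto simp: in_keys_iff)
  have sos: "SOS {x. le' x a' \<and> x \<noteq> a'} (s' i)" if "i \<in> insert j K" for i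
  proof (cases "i = j")
    case True
    have "ks w \<subseteq> {x. le' x a' \<and> x \<noteq> a'}"
    proof
      fix x assume "x \<in> ks w"
      then have h: "le' x (Poly_Mapping.single j (lk \<alpha> j - 1))" using chebW_keys w_def by blast
      then have "le' x a'" unfolding a'e
        by (meson diff_le_self le'_add_right le'_single le'_trans)
      moreover have "x \<noteq> a'"
      proof
        assume "x = a'"
        then have "lk a' j \<le> lk \<alpha> j - 1" using h unfolding le'_def by (metis lookup_single_eq)
        moreover have "lk a' j \<ge> lk \<alpha> j" unfolding a'e by (simp add: lookup_add)
        ultimately show False using jpos by linarith
      qed
      ultimately show "x \<in> {x. le' x a' \<and> x \<noteq> a'}" by blast
    qed
    then show ?thesis using True SOS_sq s'_def by simp
  next
    case False
    then have iK: "i \<in> K" using that by blast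
    have "\<forall>g. ks g \<subseteq> {x. le' x (aK \<alpha> K) \<and> x \<noteq> aK \<alpha> K} \<longrightarrow> ks (t * g) \<subseteq> {x. le' x a' \<and> x \<noteq> a'}"
    proof (intro allI impI subsetI)
      fix g z assume g: "ks g \<subseteq> {x. le' x (aK \<alpha> K) \<and> x \<noteq> aK \<alpha> K}" and z: "z \<in> ks (t * g)"
      then obtain u v where uv: "u \<in> ks t" "v \<in> ks g" "z = u + v" using keys_mult by blast
      have u: "le' u (Poly_Mapping.single j (lk \<alpha> j))" using uv chebT_keys t_def by blast
      have v: "le' v (aK \<alpha> K)" "v \<noteq> aK \<alpha> K" using uv g by auto
      show "z \<in> {x. le' x a' \<and> x \<noteq> a'}"
        using le'_add[OF u v(1)] le'_add_eq[OF u v(1)] v(2) uv(3) a'e by auto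
    qed
    then show ?thesis using SOS_mult[OF s(2)[rule_format, OF iK]] False s'_def by simp
  qed
  show ?case using id sos a'_def by blast
qed


lemma total_deg_le: "total_deg p \<le> d \<longleftrightarrow> (\<forall>m\<in>ks p. mdeg m \<le> d)"
  unfolding total_deg_def mdeg_def[abs_def] by (subst Max_le_iff) auto

lemma mdeg_le_total: "m \<in> ks p \<Longrightarrow> mdeg m \<le> total_deg p"
  using total_deg_le by blast

lemma total_deg_attained: "ks g \<noteq> {} \<Longrightarrow> \<exists>m\<in>ks g. total_deg g = mdeg m"
proof -
  assume ne: "ks g \<noteq> {}"
  have "total_deg g \<in> insert 0 (mdeg ` ks g)"
    unfolding total_deg_def mdeg_def[abs_def] by (rule Max_in) auto
  then show ?thesis
  proof
    assume z: "total_deg g = 0"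
    obtain m where m: "m \<in> ks g" using ne by blast
    then have "mdeg m = 0" using mdeg_le_total[OF m] z by simp
    then show ?thesis using z m by auto
  qed auto
qed

lemma mdeg_single: "mdeg (Poly_Mapping.single i k) = k"
  by (simp add: mdeg_def)

lemma sum_list_sq_filter: "sum_list (map (\<lambda>g. g * g) (filter (\<lambda>g. g \<noteq> 0) gs)) = sum_list (map (\<lambda>g. g * g) gs)" for gs :: "mpoly list"
  by (induction gs) auto

lemma SOS_cone:
  assumes "SOS B s" "\<forall>x\<in>B. ks x \<subseteq> {..<n} \<and> 2 * int (mdeg x) \<le> d"
  shows "s \<in> sos_cone n d"
proof -
  obtain gs where gs: "s = sum_list (map (\<lambda>g. g * g) gs)" "\<forall>g\<in>set gs. ks g \<subseteq> B"
    using assms(1) unfolding SOS_def by blast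
  let ?gs = "filter (\<lambda>g. g \<noteq> 0) gs"
  have "\<forall>g\<in>set ?gs. vars_in n g \<and> 2 * int (total_deg g) \<le> d"
  proof
    fix g assume g: "g \<in> set ?gs"
    then have ne: "ks g \<noteq> {}" by simp
    obtain m where m: "m \<in> ks g" "total_deg g = mdeg m" using total_deg_attained[OF ne] by blast
    show "vars_in n g \<and> 2 * int (total_deg g) \<le> d"
      using g gs(2) assms(2) m unfolding vars_in_def by auto
  qed
  then have "s = sum_list (map (\<lambda>g. g * g) ?gs) \<and> (\<forall>g\<in>set ?gs. vars_in n g \<and> 2 * int (total_deg g) \<le> d)"
    using gs(1) sum_list_sq_filter[of gs] by simp
  then show ?thesis unfolding sos_cone_def by blast
qed

lemma cone_zero: "0 \<in> sos_cone n d"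
  unfolding sos_cone_def by (rule CollectI, rule exI[of _ "[]"]) simp

lemma cone_add: "a \<in> sos_cone n d \<Longrightarrow> b \<in> sos_cone n d \<Longrightarrow> a + b \<in> sos_cone n d"
  unfolding sos_cone_def
  by (clarsimp, rule_tac x="gs @ gsa" in exI) auto

lemma cone_mono: "a \<in> sos_cone n d \<Longrightarrow> d \<le> d' \<Longrightarrow> a \<in> sos_cone n d'"
  unfolding sos_cone_def by force

lemma vars_in_mono: "ks p \<subseteq> ks q \<Longrightarrow> vars_in n q \<Longrightarrow> vars_in n p"
  unfolding vars_in_def by blast

lemma total_deg_mono: "ks p \<subseteq> ks q \<Longrightarrow> total_deg p \<le> total_deg q"
  using total_deg_le mdeg_le_total by (meson subsetD)

lemma sum_list_sq_scale: "sum_list (map (\<lambda>g. g * g) (map (\<lambda>g. mconst (sqrt c) * g) gs)) = mconst c * sum_list (map (\<lambda>g. g * g) gs)"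
  if "c \<ge> 0"
proof -
  have e: "mconst (sqrt c) * mconst (sqrt c) = mconst c" using that by (simp add: mconst_mult[symmetric])
  show ?thesis
  proof (induction gs)
    case Nil then show ?case by simp
  next
    case (Cons g gs)
    have "mconst (sqrt c) * g * (mconst (sqrt c) * g) = mconst c * (g * g)"
      using e by (metis mult.assoc mult.left_commute)
    then show ?case using Cons by (simp add: distrib_left)
  qed
qed

lemma cone_scale: "c \<ge> 0 \<Longrightarrow> a \<in> sos_cone n d \<Longrightarrow> mconst c * a \<in> sos_cone n d"
proof -
  assume c: "c \<ge> 0" and a: "a \<in> sos_cone n d"
  then obtain gs where gs: "a = sum_list (map (\<lambda>g. g * g) gs)" "\<forall>g\<in>set gs. vars_in n g \<and> 2 * int (total_deg g) \<le> d"
    unfolding sos_cone_def by blast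
  have "\<forall>g\<in>set (map (\<lambda>g. mconst (sqrt c) * g) gs). vars_in n g \<and> 2 * int (total_deg g) \<le> d"
  proof
    fix h assume "h \<in> set (map (\<lambda>g. mconst (sqrt c) * g) gs)"
    then obtain g where g: "g \<in> set gs" "h = mconst (sqrt c) * g" by auto
    then have "ks h \<subseteq> ks g" using keys_mconst_mult by simp
    then show "vars_in n h \<and> 2 * int (total_deg h) \<le> d" using gs(2) g(1)
      vars_in_mono total_deg_mono by (smt (verit) of_nat_le_iff)
  qed
  then have "mconst c * a = sum_list (map (\<lambda>g. g * g) (map (\<lambda>g. mconst (sqrt c) * g) gs)) \<and> (\<forall>g\<in>set (map (\<lambda>g. mconst (sqrt c) * g) gs). vars_in n g \<and> 2 * int (total_deg g) \<le> d)"
    using gs(1) sum_list_sq_scale[OF c, of gs] by simp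
  then show ?thesis unfolding sos_cone_def by blast
qed

lemma cone_keys: "s \<in> sos_cone n d \<Longrightarrow> \<forall>m\<in>ks s. int (mdeg m) \<le> d"
proof -
  assume "s \<in> sos_cone n d"
  then obtain gs where gs: "s = sum_list (map (\<lambda>g. g * g) gs)" "\<forall>g\<in>set gs. vars_in n g \<and> 2 * int (total_deg g) \<le> d"
    unfolding sos_cone_def by blast
  have "\<forall>g\<in>set gs. 2 * int (total_deg g) \<le> d \<Longrightarrow> \<forall>m\<in>ks (sum_list (map (\<lambda>g. g * g) gs)). int (mdeg m) \<le> d"
  proof (induction gs)
    case Nil then show ?case by simp
  next
    case (Cons g gs)
    have "\<forall>m\<in>ks (g * g). int (mdeg m) \<le> d"
    proof
      fix m assume "m \<in> ks (g * g)"
      then obtain u v where "u \<in> ks g" "v \<in> ks g" "m = u + v" using keys_mult by blast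
      then have "mdeg m \<le> 2 * total_deg g" using mdeg_le_total mdeg_add by (metis add_mono mult_2)
      then show "int (mdeg m) \<le> d" using Cons.prems by auto
    qed
    then show ?case using Cons keys_add[of "g * g" "sum_list (map (\<lambda>g. g * g) gs)"] by auto
  qed
  then show ?thesis using gs by blast
qed

lemma QM_intro: "s0 \<in> sos_cone n (int r) \<Longrightarrow> (\<And>i. i < n \<Longrightarrow> s i \<in> sos_cone n (int r - 2))
  \<Longrightarrow> p = s0 + (\<Sum>i<n. (1 - mvar i * mvar i) * s i) \<Longrightarrow> p \<in> quad_module n r"
  unfolding quad_module_def by blast

lemma QM_add: "a \<in> quad_module n r \<Longrightarrow> b \<in> quad_module n r \<Longrightarrow> a + b \<in> quad_module n r"
proof -
  assume "a \<in> quad_module n r" "b \<in> quad_module n r"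
  then obtain s0 s t0 t where st: "a = s0 + (\<Sum>i<n. (1 - mvar i * mvar i) * s i)" "s0 \<in> sos_cone n (int r)"
    "\<forall>i<n. s i \<in> sos_cone n (int r - 2)"
    "b = t0 + (\<Sum>i<n. (1 - mvar i * mvar i) * t i)" "t0 \<in> sos_cone n (int r)"
    "\<forall>i<n. t i \<in> sos_cone n (int r - 2)"
    unfolding quad_module_def by blast
  have "a + b = (s0 + t0) + (\<Sum>i<n. (1 - mvar i * mvar i) * (s i + t i))"
  proof -
    have e: "(\<Sum>i<n. (1 - mvar i * mvar i) * (s i + t i)) = (\<Sum>i<n. (1 - mvar i * mvar i) * s i) + (\<Sum>i<n. (1 - mvar i * mvar i) * t i)"
      by (simp only: distrib_left sum.distrib)
    show ?thesis unfolding st e by (simp add: add_ac)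
  qed
  then show ?thesis by (rule QM_intro[rotated 2]) (use st cone_add in auto)
qed

lemma QM_zero: "0 \<in> quad_module n r"
  by (rule QM_intro[of 0 _ _ "\<lambda>_. 0"]) (simp_all add: cone_zero)

lemma QM_sum: "finite S \<Longrightarrow> (\<And>x. x \<in> S \<Longrightarrow> f x \<in> quad_module n r) \<Longrightarrow> sum f S \<in> quad_module n r"
  by (induction S rule: finite_induct) (auto intro: QM_add QM_zero)

lemma QM_scale: "c \<ge> 0 \<Longrightarrow> a \<in> quad_module n r \<Longrightarrow> mconst c * a \<in> quad_module n r"
proof -
  assume c: "c \<ge> 0" and "a \<in> quad_module n r"
  then obtain s0 s where st: "a = s0 + (\<Sum>i<n. (1 - mvar i * mvar i) * s i)" "s0 \<in> sos_cone n (int r)"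
    "\<forall>i<n. s i \<in> sos_cone n (int r - 2)"
    unfolding quad_module_def by blast
  have "mconst c * a = mconst c * s0 + (\<Sum>i<n. (1 - mvar i * mvar i) * (mconst c * s i))"
    unfolding st distrib_left sum_distrib_left by (simp add: mult.left_commute)
  then show ?thesis by (rule QM_intro[rotated 2]) (use st cone_scale[OF c] in auto)
qed

lemma QM_sq: "vars_in n g \<Longrightarrow> 2 * total_deg g \<le> r \<Longrightarrow> g * g \<in> quad_module n r"
proof -
  assume h: "vars_in n g" "2 * total_deg g \<le> r"
  have "g * g \<in> sos_cone n (int r)" unfolding sos_cone_def
    by (rule CollectI, rule exI[of _ "[g]"]) (use h in auto)
  then show ?thesis by (rule QM_intro[of _ _ _ "\<lambda>_. 0"]) (simp_all add: cone_zero)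
qed

lemma QM_loc: "i < n \<Longrightarrow> s \<in> sos_cone n (int r - 2) \<Longrightarrow> (1 - mvar i * mvar i) * s \<in> quad_module n r"
proof -
  assume h: "i < n" "s \<in> sos_cone n (int r - 2)"
  have "(1 - mvar i * mvar i) * s = 0 + (\<Sum>j<n. (1 - mvar j * mvar j) * (if j = i then s else 0))"
    using h(1) by (simp add: if_distrib sum.delta cong: if_cong)
  then show ?thesis by (rule QM_intro[OF cone_zero, rotated]) (use h(2) cone_zero in auto)
qed

lemma QM_mono: "a \<in> quad_module n r \<Longrightarrow> r \<le> r' \<Longrightarrow> a \<in> quad_module n r'"
proof -
  assume a: "a \<in> quad_module n r" and rr: "r \<le> r'"
  then obtain s0 s where st: "a = s0 + (\<Sum>i<n. (1 - mvar i * mvar i) * s i)" "s0 \<in> sos_cone n (int r)"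
    "\<forall>i<n. s i \<in> sos_cone n (int r - 2)"
    unfolding quad_module_def by blast
  have "int r \<le> int r'" "int r - 2 \<le> int r' - 2" using rr by auto
  then show ?thesis by (intro QM_intro[OF _ _ st(1)]) (use st cone_mono in auto)
qed

lemma keys_loc: "m \<in> ks (1 - mvar i * mvar i) \<Longrightarrow> mdeg m \<le> 2"
proof -
  assume m: "m \<in> ks (1 - mvar i * mvar i)"
  have "mvar i * mvar i = Poly_Mapping.single (Poly_Mapping.single i 2) 1"
    by (simp add: mvar_def mult_single single_add[symmetric] numeral_2_eq_2)
  then have "ks (1 - mvar i * mvar i) \<subseteq> {0, Poly_Mapping.single i 2}" using keys_diff[of 1 "mvar i * mvar i"] by auto
  then show ?thesis using m mdeg_single by auto
qed

lemma QM_keys: "q \<in> quad_module n r \<Longrightarrow> \<forall>m\<in>ks q. mdeg m \<le> r"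
proof -
  assume "q \<in> quad_module n r"
  then obtain s0 s where st: "q = s0 + (\<Sum>i<n. (1 - mvar i * mvar i) * s i)" "s0 \<in> sos_cone n (int r)"
    "\<forall>i<n. s i \<in> sos_cone n (int r - 2)"
    unfolding quad_module_def by blast
  have "\<forall>m\<in>ks ((1 - mvar i * mvar i) * s i). mdeg m \<le> r" if i: "i < n" for i
  proof
    fix m assume "m \<in> ks ((1 - mvar i * mvar i) * s i)"
    then obtain u v where uv: "u \<in> ks (1 - mvar i * mvar i)" "v \<in> ks (s i)" "m = u + v" using keys_mult by blast
    have "int (mdeg v) \<le> int r - 2" using cone_keys st(3) i uv(2) by blast
    then show "mdeg m \<le> r" using keys_loc[OF uv(1)] uv(3) mdeg_add by simp
  qed
  then have "\<forall>m\<in>ks (\<Sum>i<n. (1 - mvar i * mvar i) * s i). mdeg m \<le> r"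
    using keys_sum[of "\<lambda>i. (1 - mvar i * mvar i) * s i" "{..<n}"] by auto
  moreover have "\<forall>m\<in>ks s0. mdeg m \<le> r" using cone_keys[OF st(2)] by auto
  ultimately show ?thesis using st(1) keys_add[of s0 "\<Sum>i<n. (1 - mvar i * mvar i) * s i"] by auto
qed


lemma T_keys: "\<forall>x\<in>ks (chebT_multi \<alpha>). le' x \<alpha>"
  using PK_keys[of "ks \<alpha>" \<alpha>] by (simp add: chebT_multi_PK alpha_aK)

lemma T_lead: "lk (chebT_multi \<alpha>) \<alpha> \<ge> 1"
  using PK_lead[of "ks \<alpha>" \<alpha>] by (simp add: chebT_multi_PK alpha_aK)

lemma one_plus_QM:
  assumes d: "mdeg \<alpha> \<le> r" and v: "ks \<alpha> \<subseteq> {..<n}"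
    and Tk: "\<forall>x\<in>ks T. le' x \<alpha>" and TT: "T * T = chebT_multi \<alpha> * chebT_multi \<alpha>"
  shows "1 + T \<in> quad_module n (2 * r)"
proof -
  obtain s where s: "1 - PK \<alpha> (ks \<alpha>) * PK \<alpha> (ks \<alpha>) = (\<Sum>i\<in>ks \<alpha>. (1 - mvar i * mvar i) * s i)"
     "\<forall>i\<in>ks \<alpha>. SOS {x. le' x (aK \<alpha> (ks \<alpha>)) \<and> x \<noteq> aK \<alpha> (ks \<alpha>)} (s i)"
    using telescope[of "ks \<alpha>" \<alpha>] by auto
  have B: "\<forall>x\<in>{x. le' x \<alpha> \<and> x \<noteq> \<alpha>}. ks x \<subseteq> {..<n} \<and> 2 * int (mdeg x) \<le> int (2 * r) - 2"
  proof
    fix x assume "x \<in> {x. le' x \<alpha> \<and> x \<noteq> \<alpha>}"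
    then have "le' x \<alpha>" "x \<noteq> \<alpha>" by auto
    then show "ks x \<subseteq> {..<n} \<and> 2 * int (mdeg x) \<le> int (2 * r) - 2"
      using le'_keys le'_mdeg_strict v d by fastforce
  qed
  have Q2: "1 - T * T \<in> quad_module n (2 * r)"
    unfolding TT chebT_multi_PK s(1)
  proof (rule QM_sum)
    fix i assume i: "i \<in> ks \<alpha>"
    show "(1 - mvar i * mvar i) * s i \<in> quad_module n (2 * r)"
      by (rule QM_loc) (use i v s(2) SOS_cone B alpha_aK in auto)
  qed simp
  have k1: "\<forall>x\<in>ks (1 + T). le' x \<alpha>" using Tk keys_add[of 1 T] by auto
  have Q1: "(1 + T) * (1 + T) \<in> quad_module n (2 * r)"
  proof (rule QM_sq)
    show "vars_in n (1 + T)" unfolding vars_in_def using k1 le'_keys v by blast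
    show "2 * total_deg (1 + T) \<le> 2 * r" using k1 le'_mdeg d total_deg_le
      by (metis le_trans mult_le_mono2)
  qed
  have e: "1 + T = mconst (1/2) * ((1 + T) * (1 + T)) + mconst (1/2) * (1 - T * T)"
  proof -
    have "mconst (1/2) * ((1 + T) * (1 + T)) + mconst (1/2) * (1 - T * T) = mconst (1/2) * (mconst 2 * (1 + T))"
      by (simp add: mconst_numeral algebra_simps)
    also have "\<dots> = 1 + T" by (simp add: mult.assoc[symmetric] mconst_mult[symmetric])
    finally show ?thesis by simp
  qed
  show ?thesis by (subst e, intro QM_add QM_scale Q1 Q2) auto
qed

lemma one_pm_QM:
  assumes d: "mdeg \<alpha> \<le> r" and v: "ks \<alpha> \<subseteq> {..<n}"
  shows "1 + chebT_multi \<alpha> \<in> quad_module n (2 * r)" "1 - chebT_multi \<alpha> \<in> quad_module n (2 * r)"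
  using one_plus_QM[OF d v T_keys] one_plus_QM[OF d v, of "- chebT_multi \<alpha>"] T_keys by auto

definition Span :: "(nat \<Rightarrow>\<^sub>0 nat) set \<Rightarrow> mpoly \<Rightarrow> bool" where
  "Span D p \<longleftrightarrow> (\<exists>B a. finite B \<and> B \<subseteq> D \<and> p = (\<Sum>\<beta>\<in>B. mconst (a \<beta>) * chebT_multi \<beta>))"

lemma sum_ext_if: "finite C \<Longrightarrow> B \<subseteq> C \<Longrightarrow>
  (\<Sum>\<beta>\<in>C. mconst (if \<beta> \<in> B then a \<beta> else 0) * chebT_multi \<beta>) = (\<Sum>\<beta>\<in>B. mconst (a \<beta>) * chebT_multi \<beta>)"
proof -
  assume C: "finite C" "B \<subseteq> C"
  have "(\<Sum>\<beta>\<in>C. mconst (if \<beta> \<in> B then a \<beta> else 0) * chebT_multi \<beta>)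
      = (\<Sum>\<beta>\<in>C. if \<beta> \<in> B then mconst (a \<beta>) * chebT_multi \<beta> else 0)"
    by (rule sum.cong) auto
  also have "\<dots> = (\<Sum>\<beta>\<in>C \<inter> B. mconst (a \<beta>) * chebT_multi \<beta>)" using C(1) by (simp add: sum.inter_restrict)
  also have "C \<inter> B = B" using C(2) by blast
  finally show ?thesis .
qed

lemma Span_zero: "Span D 0"
  unfolding Span_def by (rule exI[of _ "{}"]) simp

lemma Span_add: "Span D p \<Longrightarrow> Span D q \<Longrightarrow> Span D (p + q)"
proof -
  assume "Span D p" "Span D q"
  then obtain B a B' a' where h: "finite B" "B \<subseteq> D" "p = (\<Sum>\<beta>\<in>B. mconst (a \<beta>) * chebT_multi \<beta>)"
    "finite B'" "B' \<subseteq> D" "q = (\<Sum>\<beta>\<in>B'. mconst (a' \<beta>) * chebT_multi \<beta>)"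
    unfolding Span_def by blast
  let ?c = "\<lambda>\<beta>. (if \<beta> \<in> B then a \<beta> else 0) + (if \<beta> \<in> B' then a' \<beta> else 0)"
  have "(\<Sum>\<beta>\<in>B \<union> B'. mconst (?c \<beta>) * chebT_multi \<beta>) =
     (\<Sum>\<beta>\<in>B \<union> B'. mconst (if \<beta> \<in> B then a \<beta> else 0) * chebT_multi \<beta>) +
     (\<Sum>\<beta>\<in>B \<union> B'. mconst (if \<beta> \<in> B' then a' \<beta> else 0) * chebT_multi \<beta>)"
    by (simp only: mconst_add distrib_right sum.distrib)
  also have "\<dots> = p + q" using h by (simp add: sum_ext_if)
  finally have e: "p + q = (\<Sum>\<beta>\<in>B \<union> B'. mconst (?c \<beta>) * chebT_multi \<beta>)" by simp
  show ?thesis unfolding Span_def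
    by (intro exI[of _ "B \<union> B'"] exI[of _ ?c] conjI e) (use h in auto)
qed

lemma Span_scale: "Span D p \<Longrightarrow> Span D (mconst c * p)"
proof -
  assume "Span D p"
  then obtain B a where h: "finite B" "B \<subseteq> D" "p = (\<Sum>\<beta>\<in>B. mconst (a \<beta>) * chebT_multi \<beta>)"
    unfolding Span_def by blast
  have "mconst c * p = (\<Sum>\<beta>\<in>B. mconst (c * a \<beta>) * chebT_multi \<beta>)"
    unfolding h by (simp add: sum_distrib_left mconst_mult mult.assoc)
  then show ?thesis unfolding Span_def
    by (intro exI[of _ B] exI[of _ "\<lambda>\<beta>. c * a \<beta>"] conjI) (use h in auto)
qed

lemma Span_sum: "finite S \<Longrightarrow> (\<And>x. x \<in> S \<Longrightarrow> Span D (f x)) \<Longrightarrow> Span D (sum f S)"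
  by (induction S rule: finite_induct) (auto intro: Span_add Span_zero)

lemma Span_T: "\<beta> \<in> D \<Longrightarrow> Span D (chebT_multi \<beta>)"
  unfolding Span_def by (rule exI[of _ "{\<beta>}"], rule exI[of _ "\<lambda>_. 1"]) simp

lemma Span_mono:
  assumes down: "\<And>x m. m \<in> D \<Longrightarrow> le' x m \<Longrightarrow> x \<in> D"
  shows "m \<in> D \<Longrightarrow> Span D (Poly_Mapping.single m 1)"
proof (induction "mdeg m" arbitrary: m rule: less_induct)
  case less
  define T where "T = chebT_multi m"
  define c where "c = lk T m"
  define R where "R = T - Poly_Mapping.single m c"
  have c1: "c \<ge> 1" using T_lead c_def T_def by simp
  have kR: "\<forall>x\<in>ks R. le' x m \<and> x \<noteq> m"
  proof
    fix x assume x: "x \<in> ks R"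
    then have "x \<in> ks T" "x \<noteq> m" unfolding R_def c_def
      by (auto simp: in_keys_iff lookup_minus lookup_single when_def split: if_splits)
    then show "le' x m \<and> x \<noteq> m" using T_keys T_def by blast
  qed
  have SR: "Span D R"
  proof (subst poly_expand, rule Span_sum)
    fix x assume x: "x \<in> ks R"
    then have "mdeg x < mdeg m" "x \<in> D" using kR le'_mdeg_strict down less.prems by auto
    then show "Span D (mconst (lk R x) * Poly_Mapping.single x 1)"
      using less.hyps Span_scale by blast
  qed simp
  have ST: "Span D T" using Span_T less.prems T_def by simp
  have "Poly_Mapping.single m 1 = mconst (1 / c) * (T + mconst (-1) * R)"
  proof -
    have "T + mconst (-1) * R = mconst c * Poly_Mapping.single m 1"
      by (simp add: R_def mconst_single mconst_uminus)
    then show ?thesis using c1 by (simp add: mult.assoc[symmetric] mconst_mult[symmetric])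
  qed
  then show ?case using SR ST Span_add Span_scale by metis
qed

lemma Span_all:
  assumes down: "\<And>x m. m \<in> D \<Longrightarrow> le' x m \<Longrightarrow> x \<in> D"
  shows "ks p \<subseteq> D \<Longrightarrow> Span D p"
proof -
  assume kp: "ks p \<subseteq> D"
  show ?thesis
  proof (subst poly_expand, rule Span_sum)
    fix x assume "x \<in> ks p"
    then have "x \<in> D" using kp by blast
    then show "Span D (mconst (lk p x) * Poly_Mapping.single x 1)"
      by (intro Span_scale Span_mono[OF down])
  qed simp
qed

lemma indep:
  assumes S: "finite S" and z: "(\<Sum>\<beta>\<in>S. mconst (d \<beta>) * chebT_multi \<beta>) = 0"
  shows "\<forall>\<beta>\<in>S. d \<beta> = 0"
proof (rule ccontr)
  assume "\<not> (\<forall>\<beta>\<in>S. d \<beta> = 0)"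
  define S' where "S' = {\<beta>\<in>S. d \<beta> \<noteq> 0}"
  have S'ne: "S' \<noteq> {}" and S'f: "finite S'" using \<open>\<not> _\<close> S unfolding S'_def by auto
  have z': "(\<Sum>\<beta>\<in>S'. mconst (d \<beta>) * chebT_multi \<beta>) = 0"
    using z S by (subst (asm) sum.mono_neutral_right[of S S']) (auto simp: S'_def)
  obtain \<alpha> where \<alpha>: "\<alpha> \<in> S'" "\<forall>\<beta>\<in>S'. mdeg \<beta> \<le> mdeg \<alpha>"
  proof -
    have "Max (mdeg ` S') \<in> mdeg ` S'" using S'ne S'f by (intro Max_in) auto
    then obtain \<alpha> where "\<alpha> \<in> S'" "mdeg \<alpha> = Max (mdeg ` S')" by auto
    then show ?thesis using that S'f by (metis Max_ge finite_imageI imageI)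
  qed
  have "lk (\<Sum>\<beta>\<in>S'. mconst (d \<beta>) * chebT_multi \<beta>) \<alpha> = (\<Sum>\<beta>\<in>S'. d \<beta> * lk (chebT_multi \<beta>) \<alpha>)"
    by (simp add: lookup_sum lookup_mconst_mult)
  also have "\<dots> = d \<alpha> * lk (chebT_multi \<alpha>) \<alpha>"
  proof -
    have "\<forall>\<beta>\<in>S' - {\<alpha>}. lk (chebT_multi \<beta>) \<alpha> = 0"
    proof
      fix \<beta> assume b: "\<beta> \<in> S' - {\<alpha>}"
      show "lk (chebT_multi \<beta>) \<alpha> = 0"
      proof (rule ccontr)
        assume "lk (chebT_multi \<beta>) \<alpha> \<noteq> 0"
        then have "le' \<alpha> \<beta>" using T_keys by (simp add: in_keys_iff)
        then have "mdeg \<alpha> < mdeg \<beta>" using b le'_mdeg_strict by auto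
        then show False using b \<alpha>(2) by auto
      qed
    qed
    then show ?thesis using sum.remove[OF S'f \<alpha>(1), of "\<lambda>\<beta>. d \<beta> * lk (chebT_multi \<beta>) \<alpha>"] by simp
  qed
  finally have "d \<alpha> * lk (chebT_multi \<alpha>) \<alpha> = 0" using z' by simp
  then show False using T_lead[of \<alpha>] \<alpha>(1) unfolding S'_def by auto
qed

lemma sum_keys_ext: "finite U \<Longrightarrow> ks c \<subseteq> U \<Longrightarrow>
  (\<Sum>\<beta>\<in>ks c. mconst (lk c \<beta>) * chebT_multi \<beta>) = (\<Sum>\<beta>\<in>U. mconst (lk c \<beta>) * chebT_multi \<beta>)"
  by (rule sum.mono_neutral_left) (auto simp: in_keys_iff)

lemma cheb_coeffs_eq:
  assumes B: "finite B" and p: "p = (\<Sum>\<beta>\<in>B. mconst (a \<beta>) * chebT_multi \<beta>)"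
  shows "ks (cheb_coeffs p) \<subseteq> B \<and> p = (\<Sum>\<beta>\<in>ks (cheb_coeffs p). mconst (lk (cheb_coeffs p) \<beta>) * chebT_multi \<beta>)"
proof -
  define g where "g \<beta> = (if \<beta> \<in> B then a \<beta> else 0)" for \<beta>
  define c0 where "c0 = Abs_poly_mapping g"
  have fin: "finite {x. g x \<noteq> 0}" using B by (rule rev_finite_subset) (auto simp: g_def)
  have lc0: "lk c0 = g" unfolding c0_def using fin by simp
  have kc0: "ks c0 \<subseteq> B"
  proof
    fix x assume "x \<in> ks c0"
    then have "g x \<noteq> 0" using lc0 by (simp add: in_keys_iff)
    then show "x \<in> B" by (auto simp: g_def split: if_splits)
  qed
  have rep: "p = (\<Sum>\<beta>\<in>ks c0. mconst (lk c0 \<beta>) * chebT_multi \<beta>)"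
    unfolding p using sum_keys_ext[OF B kc0] lc0 by (simp add: g_def)
  have uniq: "c = c0" if c: "p = (\<Sum>\<beta>\<in>ks c. mconst (lk c \<beta>) * chebT_multi \<beta>)" for c
  proof -
    define U where "U = ks c \<union> ks c0"
    have U: "finite U" unfolding U_def by simp
    have "(\<Sum>\<beta>\<in>U. mconst (lk c \<beta> - lk c0 \<beta>) * chebT_multi \<beta>) =
          (\<Sum>\<beta>\<in>U. mconst (lk c \<beta>) * chebT_multi \<beta>) - (\<Sum>\<beta>\<in>U. mconst (lk c0 \<beta>) * chebT_multi \<beta>)"
      by (simp add: mconst_diff left_diff_distrib sum_subtractf)
    also have "\<dots> = 0" using c rep sum_keys_ext[OF U, of c] sum_keys_ext[OF U, of c0] U_def by simp
    finally have "\<forall>\<beta>\<in>U. lk c \<beta> - lk c0 \<beta> = 0" by (rule indep[OF U, of "\<lambda>\<beta>. lk c \<beta> - lk c0 \<beta>"])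
    then show ?thesis unfolding U_def by (intro poly_mapping_eqI) (metis UnI1 UnI2 eq_iff_diff_eq_0 not_in_keys_iff_lookup_eq_zero)
  qed
  have "cheb_coeffs p = c0" unfolding cheb_coeffs_def
    by (rule the_equality[where P="\<lambda>c. p = (\<Sum>\<beta>\<in>ks c. mconst (lk c \<beta>) * chebT_multi \<beta>)", OF rep uniq])
  then show ?thesis using kc0 rep by simp
qed

theorem theorem4:
  fixes n r :: nat and f q :: mpoly
  assumes "vars_in n f" and "vars_in n q"
    and "q \<in> quad_module n r"
    and "total_deg f \<le> r"
  shows "f + mconst (cheb_norm1 (f - q)) \<in> quad_module n (2 * r)"
proof -
  define p where "p = f - q"
  define D where "D = {x. mdeg x \<le> r \<and> ks x \<subseteq> {..<n}}"
  have down: "x \<in> D" if "m \<in> D" "le' x m" for x m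
    using that le'_mdeg le'_keys unfolding D_def by fastforce
  have kp: "ks p \<subseteq> D"
  proof
    fix m assume "m \<in> ks p"
    then have "m \<in> ks f \<or> m \<in> ks q" unfolding p_def using keys_diff[of f q] by blast
    moreover have "\<forall>m\<in>ks q. mdeg m \<le> r" using QM_keys[OF assms(3)] .
    moreover have "\<forall>m\<in>ks f. mdeg m \<le> r" using total_deg_le[of f r] assms(4) by simp
    moreover have "\<forall>m\<in>ks f. ks m \<subseteq> {..<n}" "\<forall>m\<in>ks q. ks m \<subseteq> {..<n}"
      using assms(1,2) unfolding vars_in_def by auto
    ultimately show "m \<in> D" unfolding D_def by auto
  qed
  obtain B a where Ba: "finite B" "B \<subseteq> D" "p = (\<Sum>\<beta>\<in>B. mconst (a \<beta>) * chebT_multi \<beta>)"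
  proof -
    have "Span D p" by (rule Span_all[OF down kp])
    then show ?thesis unfolding Span_def using that by metis
  qed
  define c where "c = cheb_coeffs p"
  have cc0: "ks c \<subseteq> B" "p = (\<Sum>\<beta>\<in>ks c. mconst (lk c \<beta>) * chebT_multi \<beta>)"
    using cheb_coeffs_eq[OF Ba(1,3)] unfolding c_def by blast+
  have cc: "ks c \<subseteq> D" "p = (\<Sum>\<beta>\<in>ks c. mconst (lk c \<beta>) * chebT_multi \<beta>)"
    using cc0 Ba(2) by (blast, blast)
  have norm: "cheb_norm1 p = (\<Sum>\<beta>\<in>ks c. \<bar>lk c \<beta>\<bar>)" unfolding cheb_norm1_def c_def by (rule refl)
  have eqf: "f + mconst (cheb_norm1 p) = q + (\<Sum>\<beta>\<in>ks c. mconst (lk c \<beta>) * chebT_multi \<beta> + mconst \<bar>lk c \<beta>\<bar>)"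
  proof -
    have "f = q + p" unfolding p_def by simp
    then show ?thesis unfolding norm mconst_sum sum.distrib using cc(2) by simp
  qed
  have qQ: "q \<in> quad_module n (2 * r)" using QM_mono assms(3) by simp
  have sQ: "(\<Sum>\<beta>\<in>ks c. mconst (lk c \<beta>) * chebT_multi \<beta> + mconst \<bar>lk c \<beta>\<bar>) \<in> quad_module n (2 * r)"
  proof (rule QM_sum)
    fix \<beta> assume b: "\<beta> \<in> ks c"
    then have bd: "mdeg \<beta> \<le> r" "ks \<beta> \<subseteq> {..<n}" using cc(1) D_def by auto
    show "mconst (lk c \<beta>) * chebT_multi \<beta> + mconst \<bar>lk c \<beta>\<bar> \<in> quad_module n (2 * r)"
    proof (cases "lk c \<beta> \<ge> 0")
      case True
      then have "mconst (lk c \<beta>) * chebT_multi \<beta> + mconst \<bar>lk c \<beta>\<bar> = mconst (lk c \<beta>) * (1 + chebT_multi \<beta>)"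
        by (simp add: algebra_simps)
      then show ?thesis using QM_scale[OF True one_pm_QM(1)[OF bd]] by simp
    next
      case False
      then have "mconst (lk c \<beta>) * chebT_multi \<beta> + mconst \<bar>lk c \<beta>\<bar> = mconst (- lk c \<beta>) * (1 - chebT_multi \<beta>)"
        by (simp add: algebra_simps mconst_uminus)
      then show ?thesis using QM_scale[of "- lk c \<beta>", OF _ one_pm_QM(2)[OF bd]] False by simp
    qed
  qed simp
  have "f + mconst (cheb_norm1 p) \<in> quad_module n (2 * r)" unfolding eqf by (rule QM_add[OF qQ sQ])
  then show ?thesis unfolding p_def .
qed

end
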